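(* For every $\lambda>\lambda^*$, $G(e(\lambda))>0$ and $e(\lambda)<0$.
   Context: Standing setup. Let $\gamma>0$; let $a_1,\dots,a_p>0$ with weights $\omega_i>0$, $\sum_i\omega_i=1$, and $b_1,\dots,b_n>0$ with weights $\pi_j>0$, $\sum_j\pi_j=1$. Let $\mu$ be the limiting spectral distribution of $\mathbf{N}\mathbf{N}^T$ where $\mathbf{N}=\mathbf{A}^{1/2}\mathbf{G}\mathbf{B}^{1/2}$ is $k\times l$, $\mathbf{G}$ has iid mean-zero entries of variance $1/l$, $k/l\to\gamma$, and the spectral distributions of $\mathbf{A},\mathbf{B}$ converge to $\nu=\sum_i\omega_i\delta_{a_i}$ and $\underline{\nu}=\sum_j\pi_j\delta_{b_j}$. $\mu$ is a compactly supported probability measure on $[0,\infty)$; $\lambda^*>0$ is the right endpoint of its support, and $s(\lambda)=\int\frac{d\mu(t)}{t-\lambda}$ for $\lambda>\lambda^*$. Define $G(e)=\sum_{j=1}^n\frac{b_j\pi_j}{1+\gamma b_j e}$. It is known (master equations) that there is a continuous (indeed smooth) real function $e(\lambda)$ on $(\lambda^*,\infty)$, never equal to a pole $-1/(\gamma b_j)$ of $G$ and with $a_iG(e(\lambda))\ne\lambda$, satisfying $s(\lambda)=\sum_{i=1}^p\frac{\omega_i}{a_iG(e(\lambda))-\lambda}$ and $e(\lambda)=\sum_{i=1}^p\frac{a_i\omega_i}{a_iG(e(\lambda))-\lambda}$. *)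

theory Defs
  imports "HOL-Probability.Probability"
begin

definition measure_support :: "real measure \<Rightarrow> real set" where
  "measure_support M = {x. \<forall>r>0. emeasure M (ball x r) > 0}"

definition stieltjes :: "real measure \<Rightarrow> real \<Rightarrow> real" where
  "stieltjes M l = (\<integral>t. 1 / (t - l) \<partial>M)"

definition Gfun :: "real \<Rightarrow> nat \<Rightarrow> (nat \<Rightarrow> real) \<Rightarrow> (nat \<Rightarrow> real) \<Rightarrow> real \<Rightarrow> real" where
  "Gfun \<gamma> n b \<pi> e = (\<Sum>j=1..n. b j * \<pi> j / (1 + \<gamma> * b j * e))"

end

theory Submission
  imports Defs
begin

lemma AE_in_support:
  fixes M :: "real measure"
  assumes sb: "sets M = sets borel"
  shows "AE t in M. t \<in> measure_support M"
proof -
  define F where "F = {ball x r | x r. r > 0 \<and> emeasure M (ball x r) = 0}"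
  have opF: "\<And>S. S \<in> F \<Longrightarrow> open S" unfolding F_def by auto
  obtain F' where F': "F' \<subseteq> F" "countable F'" "\<Union>F' = \<Union>F"
    using Lindelof[OF opF] by blast
  have null: "(\<Union>S\<in>F'. S) \<in> null_sets M"
  proof (rule null_sets_UN'[OF F'(2)])
    fix S assume "S \<in> F'"
    then have "S \<in> F" using F'(1) by auto
    then obtain x r where "S = ball x r" "emeasure M (ball x r) = 0" unfolding F_def by auto
    moreover have "S \<in> sets M" using sb \<open>S = ball x r\<close> by simp
    ultimately show "S \<in> null_sets M" by auto
  qed
  show ?thesis
  proof (rule AE_I'[OF null])
    show "{x \<in> space M. x \<notin> measure_support M} \<subseteq> (\<Union>S\<in>F'. S)"
    proof
      fix x assume "x \<in> {x \<in> space M. x \<notin> measure_support M}"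
      then obtain r where "r > 0" "\<not> emeasure M (ball x r) > 0"
        unfolding measure_support_def by auto
      then have "ball x r \<in> F" unfolding F_def by (auto simp: not_less)
      then have "x \<in> \<Union>F" using \<open>r>0\<close> by (meson UnionI centre_in_ball)
      then show "x \<in> (\<Union>S\<in>F'. S)" using F'(3) by simp
    qed
  qed
qed

lemma inv_neg_mono:
  fixes x y :: real
  assumes "y \<le> x" "x < 0" shows "1 / x \<le> 1 / y"
  using le_imp_inverse_le_neg[OF assms] by (simp add: inverse_eq_divide)

lemma stieltjes_bound:
  fixes \<mu> :: "real measure" and lstar l :: real
  assumes mu_prob: "prob_space \<mu>" and mu_borel: "sets \<mu> = sets borel"
    and mu_compact: "compact (measure_support \<mu>)"
    and mu_nonneg: "measure_support \<mu> \<subseteq> {0..}"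
    and lstar_def: "lstar = Sup (measure_support \<mu>)"
    and lstar_pos: "lstar > 0" and l: "l > lstar"
  shows "stieltjes \<mu> l < - 1 / l"
proof -
  interpret prob_space \<mu> by (rule mu_prob)
  let ?S = "measure_support \<mu>"
  have AEs: "AE t in \<mu>. t \<in> ?S" by (rule AE_in_support[OF mu_borel])
  have ne: "?S \<noteq> {}"
  proof
    assume "?S = {}"
    then have "AE t in \<mu>. False" using AEs by simp
    then show False using AE_False prob_space_axioms by (simp add: prob_space.AE_False)
  qed
  have bdd: "bdd_above ?S" using mu_compact by (simp add: bounded_imp_bdd_above compact_imp_bounded)
  have AEb: "AE t in \<mu>. 0 \<le> t \<and> t \<le> lstar"
    using AEs
  proof (rule AE_mp, intro AE_I2 impI)
    fix t assume "t \<in> ?S"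
    then show "0 \<le> t \<and> t \<le> lstar" using mu_nonneg bdd lstar_def cSup_upper by auto
  qed
  have lin: "lstar \<in> ?S" unfolding lstar_def
    using closed_contains_Sup[OF ne bdd] compact_imp_closed[OF mu_compact] by simp
  define B where "B = ball lstar (lstar/2)"
  have Bpos: "emeasure \<mu> B > 0" using lin lstar_pos unfolding B_def measure_support_def by auto
  have Bsets: "B \<in> sets \<mu>" using mu_borel unfolding B_def by simp
  have mB: "measure \<mu> B > 0" using Bpos emeasure_eq_measure by simp
  define \<delta> where "\<delta> = - 1 / l - 1 / (lstar/2 - l)"
  have dpos: "\<delta> > 0" unfolding \<delta>_def using l lstar_pos by (simp add: field_simps)
  define f where "f = (\<lambda>t::real. 1 / (t - l))"
  define h where "h = (\<lambda>t. - 1 / l - \<delta> * indicator B t)"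
  have fm: "f \<in> borel_measurable \<mu>" unfolding f_def measurable_cong_sets[OF mu_borel refl] by measurable
  have fint: "integrable \<mu> f"
  proof (rule Bochner_Integration.integrable_bound[where f="\<lambda>_. 1 / (l - lstar)"])
    show "integrable \<mu> (\<lambda>_. 1 / (l - lstar))" by simp
    show "f \<in> borel_measurable \<mu>" by (rule fm)
    show "AE x in \<mu>. norm (f x) \<le> norm (1 / (l - lstar))"
      using AEb
    proof (rule AE_mp, intro AE_I2 impI)
      fix t assume t: "0 \<le> t \<and> t \<le> lstar"
      then have "l - t \<ge> l - lstar" "l - lstar > 0" using l by auto
      then have "1 / (l - t) \<le> 1 / (l - lstar)" by (intro divide_left_mono) auto
      moreover have "\<bar>f t\<bar> = 1 / (l - t)" unfolding f_def using t l by (simp add: abs_div)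
      ultimately show "norm (f t) \<le> norm (1 / (l - lstar))" using l by simp
    qed
  qed
  have i1: "integrable \<mu> (\<lambda>t. indicator B t :: real)"
    using Bsets by (intro integrable_real_indicator) (auto simp: emeasure_eq_measure)
  have hint: "integrable \<mu> h" unfolding h_def
    using Bochner_Integration.integrable_diff[OF integrable_const Bochner_Integration.integrable_mult_right[OF i1]] by simp
  have "integral\<^sup>L \<mu> f \<le> integral\<^sup>L \<mu> h"
  proof (rule integral_mono_AE[OF fint hint])
    show "AE x in \<mu>. f x \<le> h x"
      using AEb
    proof (rule AE_mp, intro AE_I2 impI)
      fix t assume t: "0 \<le> t \<and> t \<le> lstar"
      show "f t \<le> h t"
      proof (cases "t \<in> B")
        case True
        then have "t > lstar/2" unfolding B_def using t by (auto simp: dist_real_def)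
        then have "1 / (t - l) \<le> 1 / (lstar/2 - l)" using t l
          by (intro inv_neg_mono) auto
        then show ?thesis using True unfolding f_def h_def \<delta>_def by simp
      next
        case False
        have "1 / (t - l) \<le> 1 / (- l)" using t l lstar_pos
          by (intro inv_neg_mono) auto
        then show ?thesis using False unfolding f_def h_def by simp
      qed
    qed
  qed
  also have "integral\<^sup>L \<mu> h = - 1 / l - \<delta> * measure \<mu> B"
  proof -
    have "integral\<^sup>L \<mu> h = integral\<^sup>L \<mu> (\<lambda>_. - 1 / l) - integral\<^sup>L \<mu> (\<lambda>t. \<delta> * indicator B t)"
      unfolding h_def
      by (rule Bochner_Integration.integral_diff[OF integrable_const Bochner_Integration.integrable_mult_right[OF i1]])
    also have "\<dots> = - 1 / l - \<delta> * measure \<mu> B" using Bsets prob_space by simp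
    finally show ?thesis .
  qed
  also have "\<dots> < - 1 / l" using dpos mB by simp
  finally show ?thesis unfolding stieltjes_def f_def .
qed

theorem corollary3p5:
  fixes \<gamma> :: real and p n :: nat
    and a \<omega> b \<pi> :: "nat \<Rightarrow> real"
    and \<mu> :: "real measure" and lstar :: real and e :: "real \<Rightarrow> real"
  assumes gamma_pos: "\<gamma> > 0"
    and a_pos: "\<forall>i\<in>{1..p}. a i > 0" and omega_pos: "\<forall>i\<in>{1..p}. \<omega> i > 0"
    and omega_sum: "(\<Sum>i=1..p. \<omega> i) = 1"
    and b_pos: "\<forall>j\<in>{1..n}. b j > 0" and pi_pos: "\<forall>j\<in>{1..n}. \<pi> j > 0"
    and pi_sum: "(\<Sum>j=1..n. \<pi> j) = 1"
    and mu_prob: "prob_space \<mu>" and mu_borel: "sets \<mu> = sets borel"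
    and mu_compact: "compact (measure_support \<mu>)"
    and mu_nonneg: "measure_support \<mu> \<subseteq> {0..}"
    and lstar_def: "lstar = Sup (measure_support \<mu>)"
    and lstar_pos: "lstar > 0"
    and e_cont: "continuous_on {lstar<..} e"
    and e_nonpole: "\<forall>l>lstar. \<forall>j\<in>{1..n}. e l \<noteq> - 1 / (\<gamma> * b j)"
    and e_nonsing: "\<forall>l>lstar. \<forall>i\<in>{1..p}. a i * Gfun \<gamma> n b \<pi> (e l) \<noteq> l"
    and master_s: "\<forall>l>lstar. stieltjes \<mu> l
        = (\<Sum>i=1..p. \<omega> i / (a i * Gfun \<gamma> n b \<pi> (e l) - l))"
    and master_e: "\<forall>l>lstar. e l
        = (\<Sum>i=1..p. a i * \<omega> i / (a i * Gfun \<gamma> n b \<pi> (e l) - l))"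
  shows "\<forall>l>lstar. Gfun \<gamma> n b \<pi> (e l) > 0 \<and> e l < 0"
proof (intro allI impI)
  fix l assume l: "l > lstar"
  define g where "g = Gfun \<gamma> n b \<pi> (e l)"
  define s where "s = stieltjes \<mu> l"
  have sb: "s < - 1 / l" unfolding s_def
    by (rule stieltjes_bound[OF mu_prob mu_borel mu_compact mu_nonneg lstar_def lstar_pos l])
  have lpos: "l > 0" using l lstar_pos by simp
  have nz: "\<And>i. i \<in> {1..p} \<Longrightarrow> a i * g - l \<noteq> 0" using e_nonsing l unfolding g_def by auto
  have sdef: "s = (\<Sum>i=1..p. \<omega> i / (a i * g - l))" using master_s l unfolding s_def g_def by auto
  have edef: "e l = (\<Sum>i=1..p. a i * \<omega> i / (a i * g - l))" using master_e l unfolding g_def by auto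
  have key: "g * e l = 1 + l * s"
  proof -
    have "g * e l = (\<Sum>i=1..p. g * (a i * \<omega> i / (a i * g - l)))" unfolding edef by (simp add: sum_distrib_left)
    also have "\<dots> = (\<Sum>i=1..p. \<omega> i + l * (\<omega> i / (a i * g - l)))"
    proof (rule sum.cong[OF refl])
      fix i assume "i \<in> {1..p}"
      then have "a i * g - l \<noteq> 0" by (rule nz)
      then show "g * (a i * \<omega> i / (a i * g - l)) = \<omega> i + l * (\<omega> i / (a i * g - l))"
        by (simp add: field_simps)
    qed
    also have "\<dots> = (\<Sum>i=1..p. \<omega> i) + l * s" unfolding sdef by (simp add: sum.distrib sum_distrib_left)
    also have "\<dots> = 1 + l * s" using omega_sum by simp
    finally show ?thesis .
  qed
  have gpos: "g > 0"
  proof (rule ccontr)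
    assume "\<not> g > 0"
    then have g0: "g \<le> 0" by simp
    have "(\<Sum>i=1..p. - \<omega> i / l) \<le> s" unfolding sdef
    proof (rule sum_mono)
      fix i assume i: "i \<in> {1..p}"
      have "a i > 0" using a_pos i by blast
      then have "a i * g \<le> 0" using g0 by (simp add: mult_nonneg_nonpos)
      then have "1 / (- l) \<le> 1 / (a i * g - l)" using lpos by (intro inv_neg_mono) auto
      then have "\<omega> i * (1 / (- l)) \<le> \<omega> i * (1 / (a i * g - l))"
        using omega_pos i by (intro mult_left_mono) (auto intro: less_imp_le)
      then show "- \<omega> i / l \<le> \<omega> i / (a i * g - l)" by simp
    qed
    moreover have "(\<Sum>i=1..p. - \<omega> i / l) = - 1 / l"
    proof -
      have "(\<Sum>i=1..p. - \<omega> i / l) = - (\<Sum>i=1..p. \<omega> i) / l"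
        by (simp add: sum_divide_distrib[symmetric] sum_negf)
      then show ?thesis using omega_sum by simp
    qed
    ultimately show False using sb by simp
  qed
  have "l * s < -1" using sb lpos by (simp add: field_simps)
  then have "g * e l < 0" using key by simp
  then have "e l < 0" using gpos by (simp add: mult_less_0_iff)
  then show "Gfun \<gamma> n b \<pi> (e l) > 0 \<and> e l < 0" using gpos unfolding g_def by simp
qed

end
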